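(* Let $H$ be a group, $K\lneq H$, $\phi\in\operatorname{Aut}(H)$, $G=\langle H,t;\ tkt^{-1}=\phi(k),\ k\in K\rangle$. Let $g\in G$ and $x,y\in H$ satisfy $g^{-1}ytg=x^{-1}\phi(x)t$ and $g^{-1}hg=x^{-1}hx$ for all $h\in H$. Then $g\in K$. *)

theory Defs
  imports "HOL-Algebra.Algebra"
begin

text \<open>HNN extension G = < H, t ; t k t^-1 = phi(k), k in K > given by its presentation:
  words in letters Gen h (h in carrier H), T (= t), Tinv (= t^-1), modulo the
  congruence generated by the relations of H, t t^-1 = 1 = t^-1 t, and t k t^-1 = phi k.\<close>

datatype 'a hnn_letter = Gen 'a | T | Tinv

definition hnn_word :: "('a, 'b) monoid_scheme \<Rightarrow> 'a hnn_letter list \<Rightarrow> bool" where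
  "hnn_word H w \<longleftrightarrow> (\<forall>l \<in> set w. case l of Gen h \<Rightarrow> h \<in> carrier H | _ \<Rightarrow> True)"

inductive hnn_rel :: "('a, 'b) monoid_scheme \<Rightarrow> 'a set \<Rightarrow> ('a \<Rightarrow> 'a)
    \<Rightarrow> 'a hnn_letter list \<Rightarrow> 'a hnn_letter list \<Rightarrow> bool"
  for H K \<phi> where
  mult: "\<lbrakk>hnn_word H u; hnn_word H v; h1 \<in> carrier H; h2 \<in> carrier H\<rbrakk> \<Longrightarrow>
     hnn_rel H K \<phi> (u @ [Gen h1, Gen h2] @ v) (u @ [Gen (h1 \<otimes>\<^bsub>H\<^esub> h2)] @ v)"
| one: "\<lbrakk>hnn_word H u; hnn_word H v\<rbrakk> \<Longrightarrow>
     hnn_rel H K \<phi> (u @ [Gen \<one>\<^bsub>H\<^esub>] @ v) (u @ v)"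
| t_tinv: "\<lbrakk>hnn_word H u; hnn_word H v\<rbrakk> \<Longrightarrow>
     hnn_rel H K \<phi> (u @ [T, Tinv] @ v) (u @ v)"
| tinv_t: "\<lbrakk>hnn_word H u; hnn_word H v\<rbrakk> \<Longrightarrow>
     hnn_rel H K \<phi> (u @ [Tinv, T] @ v) (u @ v)"
| conj: "\<lbrakk>hnn_word H u; hnn_word H v; k \<in> K; k \<in> carrier H; \<phi> k \<in> carrier H\<rbrakk> \<Longrightarrow>
     hnn_rel H K \<phi> (u @ [T, Gen k, Tinv] @ v) (u @ [Gen (\<phi> k)] @ v)"
| refl: "hnn_word H w \<Longrightarrow> hnn_rel H K \<phi> w w"
| sym: "hnn_rel H K \<phi> a b \<Longrightarrow> hnn_rel H K \<phi> b a"
| trans: "hnn_rel H K \<phi> a b \<Longrightarrow> hnn_rel H K \<phi> b c \<Longrightarrow> hnn_rel H K \<phi> a c"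

definition HNN :: "('a, 'b) monoid_scheme \<Rightarrow> 'a set \<Rightarrow> ('a \<Rightarrow> 'a)
    \<Rightarrow> 'a hnn_letter list set monoid" where
  "HNN H K \<phi> = \<lparr>carrier = {w. hnn_word H w} // {(a, b). hnn_rel H K \<phi> a b},
     monoid.mult = (\<lambda>A B. \<Union>a\<in>A. \<Union>b\<in>B. {c. hnn_rel H K \<phi> (a @ b) c}),
     monoid.one = {c. hnn_rel H K \<phi> [] c}\<rparr>"

definition hnn_emb :: "('a, 'b) monoid_scheme \<Rightarrow> 'a set \<Rightarrow> ('a \<Rightarrow> 'a) \<Rightarrow> 'a \<Rightarrow> 'a hnn_letter list set" where
  "hnn_emb H K \<phi> h = {c. hnn_rel H K \<phi> [Gen h] c}"

definition hnn_t :: "('a, 'b) monoid_scheme \<Rightarrow> 'a set \<Rightarrow> ('a \<Rightarrow> 'a) \<Rightarrow> 'a hnn_letter list set" where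
  "hnn_t H K \<phi> = {c. hnn_rel H K \<phi> [T] c}"

end

theory Submission
  imports Defs
begin


lemma hnn_word_simps[simp]:
  "hnn_word H []"
  "hnn_word H (a # w) \<longleftrightarrow> (case a of Gen h \<Rightarrow> h \<in> carrier H | _ \<Rightarrow> True) \<and> hnn_word H w"
  "hnn_word H (u @ v) \<longleftrightarrow> hnn_word H u \<and> hnn_word H v"
  by (auto simp: hnn_word_def)

lemma hnn_rel_words: "hnn_rel H K \<phi> a b \<Longrightarrow> group H \<Longrightarrow> hnn_word H a \<and> hnn_word H b"
  by (induction rule: hnn_rel.induct) (auto simp: group.is_monoid monoid.m_closed)

lemma hnn_rel_cong:
  assumes "hnn_rel H K \<phi> a b" "hnn_word H u" "hnn_word H v"
  shows "hnn_rel H K \<phi> (u @ a @ v) (u @ b @ v)"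
  using assms
proof (induction rule: hnn_rel.induct)
  case (mult u' v' h1 h2)
  show ?case using hnn_rel.mult[of H "u@u'" "v'@v" h1 h2 K \<phi>] mult by simp
next
  case (one u' v')
  show ?case using hnn_rel.one[of H "u@u'" "v'@v" K \<phi>] one by simp
next
  case (t_tinv u' v')
  show ?case using hnn_rel.t_tinv[of H "u@u'" "v'@v" K \<phi>] t_tinv by simp
next
  case (tinv_t u' v')
  show ?case using hnn_rel.tinv_t[of H "u@u'" "v'@v" K \<phi>] tinv_t by simp
next
  case (conj u' v' k)
  show ?case using hnn_rel.conj[of H "u@u'" "v'@v" k K \<phi>] conj by simp
next
  case (refl w)
  then show ?case by (auto intro: hnn_rel.refl)
next
  case (sym a b)
  then show ?case by (auto intro: hnn_rel.sym)
next
  case (trans a b c)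
  then show ?case by (metis hnn_rel.trans)
qed

lemma hnn_rel_app:
  assumes "group H" "hnn_rel H K \<phi> a a'" "hnn_rel H K \<phi> b b'"
  shows "hnn_rel H K \<phi> (a @ b) (a' @ b')"
proof -
  have "hnn_rel H K \<phi> ([] @ a @ b) ([] @ a' @ b)"
    by (rule hnn_rel_cong) (use assms hnn_rel_words[OF assms(3) assms(1)] in auto)
  moreover have "hnn_rel H K \<phi> (a' @ b @ []) (a' @ b' @ [])"
    by (rule hnn_rel_cong) (use assms hnn_rel_words[OF assms(2) assms(1)] in auto)
  ultimately show ?thesis by (auto intro: hnn_rel.trans)
qed

lemma hnn_rel_app_l:
  assumes "group H" "hnn_rel H K \<phi> b b'" "hnn_word H a"
  shows "hnn_rel H K \<phi> (a @ b) (a @ b')"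
  using hnn_rel_app[OF assms(1) hnn_rel.refl[OF assms(3)] assms(2)] .

abbreviation "cls H K \<phi> a \<equiv> {c. hnn_rel H K \<phi> a c}"

lemma cls_eq: "hnn_rel H K \<phi> a b \<Longrightarrow> cls H K \<phi> a = cls H K \<phi> b"
  by (auto intro: hnn_rel.trans hnn_rel.sym)

lemma cls_eqD: "cls H K \<phi> a = cls H K \<phi> b \<Longrightarrow> hnn_word H b \<Longrightarrow> hnn_rel H K \<phi> a b"
  by (auto intro: hnn_rel.refl)

lemma HNN_carrier: "carrier (HNN H K \<phi>) = (\<lambda>a. cls H K \<phi> a) ` {w. hnn_word H w}"
  by (auto simp: HNN_def quotient_def Image_def)

lemma HNN_mult:
  assumes "group H" "hnn_word H a" "hnn_word H b"
  shows "cls H K \<phi> a \<otimes>\<^bsub>HNN H K \<phi>\<^esub> cls H K \<phi> b = cls H K \<phi> (a @ b)"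
proof -
  have "\<And>a' b' c. hnn_rel H K \<phi> a a' \<Longrightarrow> hnn_rel H K \<phi> b b' \<Longrightarrow> hnn_rel H K \<phi> (a'@b') c
     \<Longrightarrow> hnn_rel H K \<phi> (a@b) c"
    by (meson hnn_rel.trans hnn_rel_app assms(1))
  moreover have "hnn_rel H K \<phi> a a" "hnn_rel H K \<phi> b b" using assms by (auto intro: hnn_rel.refl)
  ultimately show ?thesis unfolding HNN_def by auto
qed

lemma HNN_one: "\<one>\<^bsub>HNN H K \<phi>\<^esub> = cls H K \<phi> []"
  by (simp add: HNN_def)

primrec invl :: "('a, 'b) monoid_scheme \<Rightarrow> 'a hnn_letter \<Rightarrow> 'a hnn_letter" where
  "invl H (Gen h) = Gen (inv\<^bsub>H\<^esub> h)"
| "invl H T = Tinv"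
| "invl H Tinv = T"

lemma invl_rel:
  assumes "group H" "hnn_word H [a]"
  shows "hnn_rel H K \<phi> [invl H a, a] []"
proof (cases a)
  case (Gen h)
  then have h: "h \<in> carrier H" using assms by simp
  have "hnn_rel H K \<phi> ([] @ [Gen (inv\<^bsub>H\<^esub> h), Gen h] @ []) ([] @ [Gen (inv\<^bsub>H\<^esub> h \<otimes>\<^bsub>H\<^esub> h)] @ [])"
    by (rule hnn_rel.mult) (use h assms in auto)
  moreover have "hnn_rel H K \<phi> ([] @ [Gen \<one>\<^bsub>H\<^esub>] @ []) ([] @ [])"
    by (rule hnn_rel.one) auto
  ultimately show ?thesis using Gen h assms by (auto intro: hnn_rel.trans simp: group.l_inv)
next
  case T
  then show ?thesis using hnn_rel.tinv_t[of H "[]" "[]" K \<phi>] by simp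
next
  case Tinv
  then show ?thesis using hnn_rel.t_tinv[of H "[]" "[]" K \<phi>] by simp
qed

lemma HNN_group:
  assumes "group H"
  shows "group (HNN H K \<phi>)"
proof (rule groupI)
  fix x y assume "x \<in> carrier (HNN H K \<phi>)" "y \<in> carrier (HNN H K \<phi>)"
  then show "x \<otimes>\<^bsub>HNN H K \<phi>\<^esub> y \<in> carrier (HNN H K \<phi>)"
    by (auto simp: HNN_carrier HNN_mult assms)
next
  show "\<one>\<^bsub>HNN H K \<phi>\<^esub> \<in> carrier (HNN H K \<phi>)"
    by (auto simp: HNN_carrier HNN_one intro!: image_eqI[of _ _ "[]"])
next
  fix x y z assume "x \<in> carrier (HNN H K \<phi>)" "y \<in> carrier (HNN H K \<phi>)" "z \<in> carrier (HNN H K \<phi>)"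
  then show "x \<otimes>\<^bsub>HNN H K \<phi>\<^esub> y \<otimes>\<^bsub>HNN H K \<phi>\<^esub> z = x \<otimes>\<^bsub>HNN H K \<phi>\<^esub> (y \<otimes>\<^bsub>HNN H K \<phi>\<^esub> z)"
    by (auto simp: HNN_carrier HNN_mult assms)
next
  fix x assume "x \<in> carrier (HNN H K \<phi>)"
  then show "\<one>\<^bsub>HNN H K \<phi>\<^esub> \<otimes>\<^bsub>HNN H K \<phi>\<^esub> x = x"
    by (auto simp: HNN_carrier HNN_mult HNN_one assms)
next
  fix x assume "x \<in> carrier (HNN H K \<phi>)"
  then obtain a where a: "hnn_word H a" "x = cls H K \<phi> a" by (auto simp: HNN_carrier)
  have inv: "hnn_word H (rev (map (invl H) a)) \<and> hnn_rel H K \<phi> (rev (map (invl H) a) @ a) []"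
    using a(1)
  proof (induction a)
    case Nil
    then show ?case by (auto intro: hnn_rel.refl)
  next
    case (Cons l a)
    have w1: "hnn_word H [l]" "hnn_word H [invl H l]" using Cons.prems assms
      by (cases l; auto)+
    have "hnn_rel H K \<phi> (rev (map (invl H) a) @ ([invl H l, l] @ a)) (rev (map (invl H) a) @ ([] @ a))"
      by (rule hnn_rel_cong) (use invl_rel[OF assms w1(1)] Cons in auto)
    then show ?case using Cons w1 by (auto intro: hnn_rel.trans)
  qed
  show "\<exists>y\<in>carrier (HNN H K \<phi>). y \<otimes>\<^bsub>HNN H K \<phi>\<^esub> x = \<one>\<^bsub>HNN H K \<phi>\<^esub>"
    using inv a by (auto simp: HNN_carrier HNN_mult HNN_one assms intro!: bexI[of _ "cls H K \<phi> (rev (map (invl H) a))"] cls_eq)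
qed



locale hnnl = group H for H :: "'a monoid" (structure) +
  fixes K :: "'a set" and \<phi> :: "'a \<Rightarrow> 'a"
  assumes sub: "subgroup K H" and iso: "\<phi> \<in> iso H H"
begin

definition P where "P = \<phi> ` K"
definition psi where "psi = inv_into K \<phi>"

lemma phi_hom: "\<phi> \<in> hom H H" using iso by (simp add: iso_def)
lemma phi_inj: "inj_on \<phi> (carrier H)" using iso by (simp add: iso_def bij_betw_def)
lemma phi_carr[simp]: "x \<in> carrier H \<Longrightarrow> \<phi> x \<in> carrier H"
  using phi_hom by (simp add: hom_def Pi_def)
lemma phi_mult[simp]: "x \<in> carrier H \<Longrightarrow> y \<in> carrier H \<Longrightarrow> \<phi> (x \<otimes> y) = \<phi> x \<otimes> \<phi> y"
  using phi_hom by (simp add: hom_def)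
lemma gh: "group_hom H H \<phi>"
  by (simp add: group_hom_axioms_def group_hom_def is_group phi_hom)
lemma phi_one[simp]: "\<phi> \<one> = \<one>"
  using group_hom.hom_one[OF gh] by simp
lemma subP: "subgroup P H"
  unfolding P_def using group_hom.subgroup_img_is_subgroup[OF gh sub] .
lemma K_carr: "k \<in> K \<Longrightarrow> k \<in> carrier H" by (rule subgroup.mem_carrier[OF sub])
lemma P_carr: "k \<in> P \<Longrightarrow> k \<in> carrier H" by (rule subgroup.mem_carrier[OF subP])
lemma phi_inj_K: "inj_on \<phi> K" using phi_inj K_carr by (meson inj_on_subset subsetI)
lemma psi_K: "k \<in> P \<Longrightarrow> psi k \<in> K" unfolding P_def psi_def by (simp add: inv_into_into)
lemma phi_psi[simp]: "k \<in> P \<Longrightarrow> \<phi> (psi k) = k" unfolding P_def psi_def by (simp add: f_inv_into_f)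
lemma psi_phi[simp]: "k \<in> K \<Longrightarrow> psi (\<phi> k) = k" unfolding psi_def using phi_inj_K by simp
lemma phi_K: "k \<in> K \<Longrightarrow> \<phi> k \<in> P" unfolding P_def by simp

definition rep where
  "rep S a = (if a \<in> S then \<one> else (SOME r. r \<in> carrier H \<and> a \<otimes> inv r \<in> S))"

context
  fixes S assumes S: "subgroup S H"
begin

lemma S_carr: "x \<in> S \<Longrightarrow> x \<in> carrier H" by (rule subgroup.mem_carrier[OF S])

lemma S_sym: "x \<in> carrier H \<Longrightarrow> y \<in> carrier H \<Longrightarrow> x \<otimes> inv y \<in> S \<Longrightarrow> y \<otimes> inv x \<in> S"
proof -
  assume c: "x \<in> carrier H" "y \<in> carrier H" and m: "x \<otimes> inv y \<in> S"
  have "inv (x \<otimes> inv y) = y \<otimes> inv x" using c by (simp add: inv_mult_group)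
  then show ?thesis using m S subgroup.m_inv_closed by metis
qed

lemma S_trans: "x \<in> carrier H \<Longrightarrow> y \<in> carrier H \<Longrightarrow> z \<in> carrier H \<Longrightarrow>
  x \<otimes> inv y \<in> S \<Longrightarrow> y \<otimes> inv z \<in> S \<Longrightarrow> x \<otimes> inv z \<in> S"
proof -
  assume c: "x \<in> carrier H" "y \<in> carrier H" "z \<in> carrier H" and m: "x \<otimes> inv y \<in> S" "y \<otimes> inv z \<in> S"
  have "(x \<otimes> inv y) \<otimes> (y \<otimes> inv z) = x \<otimes> inv z"
    using c by (simp add: m_assoc[symmetric]) (simp add: m_assoc)
  then show ?thesis using m S subgroup.m_closed by metis
qed

lemma S_iff: "x \<in> carrier H \<Longrightarrow> x \<in> S \<longleftrightarrow> x \<otimes> inv \<one> \<in> S" by simp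

lemma rep_props: "a \<in> carrier H \<Longrightarrow> rep S a \<in> carrier H \<and> a \<otimes> inv (rep S a) \<in> S"
proof (cases "a \<in> S")
  case True
  assume "a \<in> carrier H" then show ?thesis using True by (simp add: rep_def)
next
  case False
  assume a: "a \<in> carrier H"
  have "\<exists>r. r \<in> carrier H \<and> a \<otimes> inv r \<in> S"
    by (rule exI[of _ a]) (simp add: a subgroup.one_closed[OF S])
  from someI_ex[OF this] show ?thesis using False by (simp add: rep_def)
qed

lemma rep_carr[simp]: "a \<in> carrier H \<Longrightarrow> rep S a \<in> carrier H" using rep_props by blast
lemma rep_mem: "a \<in> carrier H \<Longrightarrow> a \<otimes> inv (rep S a) \<in> S" using rep_props by blast

lemma rep_one_iff: "a \<in> carrier H \<Longrightarrow> rep S a = \<one> \<longleftrightarrow> a \<in> S"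
proof
  assume a: "a \<in> carrier H" and "rep S a = \<one>"
  then show "a \<in> S" using rep_mem[OF a] by simp
next
  assume "a \<in> S" then show "rep S a = \<one>" by (simp add: rep_def)
qed

lemma rep_cong:
  assumes a: "a \<in> carrier H" and b: "b \<in> carrier H" and ab: "a \<otimes> inv b \<in> S"
  shows "rep S a = rep S b"
proof -
  have ba: "b \<otimes> inv a \<in> S" using S_sym a b ab by blast
  have ab1: "a \<in> S \<longleftrightarrow> b \<in> S"
  proof
    assume "a \<in> S" then have "a \<otimes> inv \<one> \<in> S" by (simp add: a)
    from S_trans[OF b a one_closed ba this] show "b \<in> S" using b by simp
  next
    assume "b \<in> S" then have "b \<otimes> inv \<one> \<in> S" by (simp add: b)
    from S_trans[OF a b one_closed ab this] show "a \<in> S" using a by simp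
  qed
  have "\<And>r. (r \<in> carrier H \<and> a \<otimes> inv r \<in> S) = (r \<in> carrier H \<and> b \<otimes> inv r \<in> S)"
  proof -
    fix r show "(r \<in> carrier H \<and> a \<otimes> inv r \<in> S) = (r \<in> carrier H \<and> b \<otimes> inv r \<in> S)"
      using S_trans[OF a b _ ab, of r] S_trans[OF b a _ ba, of r] by blast
  qed
  then show ?thesis unfolding rep_def using ab1 by simp
qed

lemma rep_rep[simp]: "a \<in> carrier H \<Longrightarrow> rep S (rep S a) = rep S a"
  by (rule rep_cong) (simp_all add: S_sym rep_mem)

lemma rep_left: "k \<in> S \<Longrightarrow> a \<in> carrier H \<Longrightarrow> rep S (k \<otimes> a) = rep S a"
  by (rule rep_cong) (use S_carr in \<open>auto simp: m_assoc\<close>)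

lemma rep_eqD: "a \<in> carrier H \<Longrightarrow> b \<in> carrier H \<Longrightarrow> rep S a = rep S b \<Longrightarrow> a \<otimes> inv b \<in> S"
proof -
  assume a: "a \<in> carrier H" and b: "b \<in> carrier H" and e: "rep S a = rep S b"
  have "rep S b \<otimes> inv b \<in> S" using S_sym[OF b rep_carr[OF b] rep_mem[OF b]] .
  then show ?thesis using S_trans[OF a rep_carr[OF a] b rep_mem[OF a]] e by simp
qed

end


lemma subS: "subgroup (if e then K else P) H" using sub subP by simp

definition rp :: "bool \<Rightarrow> 'a \<Rightarrow> 'a" where "rp e = rep (if e then K else P)"

lemma rp_carr[simp]: "a \<in> carrier H \<Longrightarrow> rp e a \<in> carrier H"
  unfolding rp_def using rep_carr[OF subS] .
lemma rp_mem: "a \<in> carrier H \<Longrightarrow> a \<otimes> inv (rp e a) \<in> (if e then K else P)"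
  unfolding rp_def using rep_mem[OF subS] .
lemma rp_rp[simp]: "a \<in> carrier H \<Longrightarrow> rp e (rp e a) = rp e a"
  unfolding rp_def using rep_rep[OF subS] .
lemma rp_one_iff: "a \<in> carrier H \<Longrightarrow> rp e a = \<one> \<longleftrightarrow> a \<in> (if e then K else P)"
  unfolding rp_def using rep_one_iff[OF subS] .
lemma rp_left: "k \<in> (if e then K else P) \<Longrightarrow> a \<in> carrier H \<Longrightarrow> rp e (k \<otimes> a) = rp e a"
  unfolding rp_def using rep_left[OF subS] .
lemma rp_eqD: "a \<in> carrier H \<Longrightarrow> b \<in> carrier H \<Longrightarrow> rp e a = rp e b \<Longrightarrow> a \<otimes> inv b \<in> (if e then K else P)"
  unfolding rp_def using rep_eqD[OF subS] .
lemma rp_K: "a \<in> carrier H \<Longrightarrow> a \<otimes> inv (rp True a) \<in> K" using rp_mem[of a True] by simp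
lemma rp_P: "a \<in> carrier H \<Longrightarrow> a \<otimes> inv (rp False a) \<in> P" using rp_mem[of a False] by simp

definition push :: "bool \<Rightarrow> 'a \<Rightarrow> 'a \<Rightarrow> (bool \<times> 'a) list \<Rightarrow> 'a \<times> (bool \<times> 'a) list" where
  "push e c r L = (case L of [] \<Rightarrow> (c, [(e,r)])
     | (e',r1)#L' \<Rightarrow> if r = \<one> \<and> e' \<noteq> e then (c \<otimes> r1, L') else (c, (e,r)#L))"

fun actL :: "'a hnn_letter \<Rightarrow> 'a \<times> (bool \<times> 'a) list \<Rightarrow> 'a \<times> (bool \<times> 'a) list" where
  "actL (Gen h) x = (h \<otimes> fst x, snd x)"
| "actL T x = push True (\<phi> (fst x \<otimes> inv (rp True (fst x)))) (rp True (fst x)) (snd x)"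
| "actL Tinv x = push False (psi (fst x \<otimes> inv (rp False (fst x)))) (rp False (fst x)) (snd x)"

primrec act :: "'a hnn_letter list \<Rightarrow> 'a \<times> (bool \<times> 'a) list \<Rightarrow> 'a \<times> (bool \<times> 'a) list" where
  "act [] x = x"
| "act (a#w) x = actL a (act w x)"

lemma act_append[simp]: "act (u @ v) x = act u (act v x)"
  by (induction u) auto

fun okL :: "(bool \<times> 'a) list \<Rightarrow> bool" where
  "okL [] = True"
| "okL ((e,r)#L) = (r \<in> carrier H \<and> rp e r = r \<and> okL L \<and>
      (case L of [] \<Rightarrow> True | (e',_)#_ \<Rightarrow> (e \<noteq> e' \<longrightarrow> r \<noteq> \<one>)))"

definition NF where "NF = {x. fst x \<in> carrier H \<and> okL (snd x)}"

lemma push_NF: "c \<in> carrier H \<Longrightarrow> r \<in> carrier H \<Longrightarrow> rp e r = r \<Longrightarrow> okL L \<Longrightarrow> push e c r L \<in> NF"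
  by (cases L) (auto simp: push_def NF_def split: list.splits)

lemma actL_NF: "x \<in> NF \<Longrightarrow> hnn_word H [a] \<Longrightarrow> actL a x \<in> NF"
proof (cases a)
  case (Gen h)
  assume "x \<in> NF" "hnn_word H [a]" then show ?thesis using Gen by (auto simp: NF_def)
next
  case T
  assume x: "x \<in> NF"
  then have c: "fst x \<in> carrier H" by (simp add: NF_def)
  show ?thesis unfolding T actL.simps
    by (rule push_NF) (use x c rp_K K_carr in \<open>auto simp: NF_def\<close>)
next
  case Tinv
  assume x: "x \<in> NF"
  then have c: "fst x \<in> carrier H" by (simp add: NF_def)
  show ?thesis unfolding Tinv actL.simps
    by (rule push_NF) (use x c rp_P psi_K K_carr in \<open>auto simp: NF_def\<close>)
qed

lemma act_NF: "hnn_word H w \<Longrightarrow> x \<in> NF \<Longrightarrow> act w x \<in> NF"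
proof (induction w)
  case Nil then show ?case by simp
next
  case (Cons a w)
  then have "hnn_word H [a]" by (cases a) auto
  then show ?case using Cons actL_NF by auto
qed

lemma okL_noT: "okL ((True, r1) # (False, r2) # L) \<Longrightarrow> r1 \<noteq> \<one>" by simp
lemma okL_noF: "okL ((False, r1) # (True, r2) # L) \<Longrightarrow> r1 \<noteq> \<one>" by simp

lemma TTi: assumes x: "x \<in> NF" shows "actL T (actL Tinv x) = x"
proof -
  obtain h0 L where x0: "x = (h0, L)" by (cases x)
  have h0: "h0 \<in> carrier H" and L: "okL L" using x x0 by (auto simp: NF_def)
  define r where "r = rp False h0"
  define k where "k = psi (h0 \<otimes> inv r)"
  have r: "r \<in> carrier H" using h0 r_def by simp
  have kP: "h0 \<otimes> inv r \<in> P" using rp_P h0 r_def by simp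
  have k: "k \<in> K" "\<phi> k = h0 \<otimes> inv r" using kP psi_K k_def by auto
  have kc: "k \<in> carrier H" using k K_carr by simp
  have a1: "actL Tinv x = push False k r L" using x0 r_def k_def by simp
  show ?thesis
  proof (cases "\<exists>r1 L'. L = (True, r1) # L' \<and> r = \<one>")
    case True
    then obtain r1 L' where L1: "L = (True, r1) # L'" and r1: "r = \<one>" by blast
    have r1c: "r1 \<in> carrier H" "rp True r1 = r1" using L L1 by auto
    have "actL Tinv x = (k \<otimes> r1, L')" using a1 L1 r1 by (simp add: push_def)
    moreover have "rp True (k \<otimes> r1) = r1" using rp_left[of k True r1] k r1c by simp
    moreover have "k \<otimes> r1 \<otimes> inv r1 = k" using kc r1c by (simp add: m_assoc)
    moreover have "\<phi> k = h0" using k r1 h0 by simp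
    moreover have "\<not> (r1 = \<one> \<and> (\<exists>r2 L''. L' = (False, r2) # L''))" using L L1 by auto
    ultimately show ?thesis using x0 L1 by (auto simp: push_def split: list.splits)
  next
    case False
    then have "actL Tinv x = (k, (False, r) # L)" using a1 by (auto simp: push_def split: list.splits)
    moreover have "rp True k = \<one>" using rp_one_iff[of k True] kc k by simp
    moreover have "\<phi> k \<otimes> r = h0" using k r h0 by (simp add: m_assoc)
    ultimately show ?thesis using x0 kc by (simp add: push_def)
  qed
qed

lemma TiT: assumes x: "x \<in> NF" shows "actL Tinv (actL T x) = x"
proof -
  obtain h0 L where x0: "x = (h0, L)" by (cases x)
  have h0: "h0 \<in> carrier H" and L: "okL L" using x x0 by (auto simp: NF_def)
  define r where "r = rp True h0"
  define k where "k = h0 \<otimes> inv r"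
  have r: "r \<in> carrier H" using h0 r_def by simp
  have k: "k \<in> K" using rp_K h0 r_def k_def by simp
  have kc: "k \<in> carrier H" using k K_carr by simp
  have pk: "\<phi> k \<in> P" "psi (\<phi> k) = k" "\<phi> k \<in> carrier H" using k phi_K kc by auto
  have a1: "actL T x = push True (\<phi> k) r L" using x0 r_def k_def by simp
  show ?thesis
  proof (cases "\<exists>r1 L'. L = (False, r1) # L' \<and> r = \<one>")
    case True
    then obtain r1 L' where L1: "L = (False, r1) # L'" and r1: "r = \<one>" by blast
    have r1c: "r1 \<in> carrier H" "rp False r1 = r1" using L L1 by auto
    have "actL T x = (\<phi> k \<otimes> r1, L')" using a1 L1 r1 by (simp add: push_def)
    moreover have "rp False (\<phi> k \<otimes> r1) = r1" using rp_left[of "\<phi> k" False r1] pk r1c by simp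
    moreover have "\<phi> k \<otimes> r1 \<otimes> inv r1 = \<phi> k" using pk r1c by (simp add: m_assoc)
    moreover have "k = h0" using k_def r1 h0 by simp
    moreover have "\<not> (r1 = \<one> \<and> (\<exists>r2 L''. L' = (True, r2) # L''))" using L L1 by auto
    ultimately show ?thesis using x0 L1 pk by (auto simp: push_def split: list.splits)
  next
    case False
    then have "actL T x = (\<phi> k, (True, r) # L)" using a1 by (auto simp: push_def split: list.splits)
    moreover have "rp False (\<phi> k) = \<one>" using rp_one_iff[of "\<phi> k" False] pk by simp
    moreover have "k \<otimes> r = h0" using k_def r h0 by (simp add: m_assoc)
    ultimately show ?thesis using x0 pk by (simp add: push_def)
  qed
qed

lemma conjrel: assumes x: "x \<in> NF" and kK: "k \<in> K"
  shows "actL T (actL (Gen k) (actL Tinv x)) = actL (Gen (\<phi> k)) x"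
proof -
  obtain h0 L where x0: "x = (h0, L)" by (cases x)
  have h0: "h0 \<in> carrier H" and L: "okL L" using x x0 by (auto simp: NF_def)
  have kc: "k \<in> carrier H" using kK K_carr by simp
  define r where "r = rp False h0"
  define k1 where "k1 = psi (h0 \<otimes> inv r)"
  have r: "r \<in> carrier H" using h0 r_def by simp
  have kP: "h0 \<otimes> inv r \<in> P" using rp_P h0 r_def by simp
  have k1: "k1 \<in> K" "\<phi> k1 = h0 \<otimes> inv r" using kP psi_K k1_def by auto
  have k1c: "k1 \<in> carrier H" using k1 K_carr by simp
  have kk: "k \<otimes> k1 \<in> K" using kK k1 subgroup.m_closed[OF sub] by blast
  have kkc: "k \<otimes> k1 \<in> carrier H" using kc k1c by simp
  have a1: "actL Tinv x = push False k1 r L" using x0 r_def k1_def by simp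
  show ?thesis
  proof (cases "\<exists>r1 L'. L = (True, r1) # L' \<and> r = \<one>")
    case True
    then obtain r1 L' where L1: "L = (True, r1) # L'" and r1: "r = \<one>" by blast
    have r1c: "r1 \<in> carrier H" "rp True r1 = r1" using L L1 by auto
    have "actL (Gen k) (actL Tinv x) = (k \<otimes> k1 \<otimes> r1, L')" using a1 L1 r1 kc k1c r1c
      by (simp add: push_def m_assoc)
    moreover have "rp True (k \<otimes> k1 \<otimes> r1) = r1" using rp_left[of "k \<otimes> k1" True r1] kk r1c by simp
    moreover have "k \<otimes> k1 \<otimes> r1 \<otimes> inv r1 = k \<otimes> k1" using kkc r1c by (simp add: m_assoc)
    moreover have "\<phi> (k \<otimes> k1) = \<phi> k \<otimes> h0" using k1 r1 h0 kc k1c by simp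
    moreover have "\<not> (r1 = \<one> \<and> (\<exists>r2 L''. L' = (False, r2) # L''))" using L L1 by auto
    ultimately show ?thesis using x0 L1 by (auto simp: push_def split: list.splits)
  next
    case False
    then have "actL (Gen k) (actL Tinv x) = (k \<otimes> k1, (False, r) # L)" using a1
      by (auto simp: push_def split: list.splits)
    moreover have "rp True (k \<otimes> k1) = \<one>" using rp_one_iff[of "k \<otimes> k1" True] kkc kk by simp
    moreover have "\<phi> (k \<otimes> k1) \<otimes> r = \<phi> k \<otimes> h0" using k1 r h0 kc k1c by (simp add: m_assoc)
    ultimately show ?thesis using x0 kkc by (simp add: push_def)
  qed
qed

lemma act_rel: "hnn_rel H K \<phi> a b \<Longrightarrow> x \<in> NF \<Longrightarrow> act a x = act b x"
proof (induction arbitrary: x rule: hnn_rel.induct)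
  case (mult u v h1 h2)
  have "act v x \<in> NF" using act_NF mult by blast
  then have "fst (act v x) \<in> carrier H" by (simp add: NF_def)
  then show ?case using mult by (simp add: m_assoc)
next
  case (one u v)
  have "act v x \<in> NF" using act_NF one by blast
  then have "fst (act v x) \<in> carrier H" by (simp add: NF_def)
  then show ?case by simp
next
  case (t_tinv u v)
  have "act v x \<in> NF" using act_NF t_tinv by blast
  then show ?case using TTi by simp
next
  case (tinv_t u v)
  have "act v x \<in> NF" using act_NF tinv_t by blast
  then show ?case using TiT by simp
next
  case (conj u v k)
  have "act v x \<in> NF" using act_NF conj by blast
  then show ?case using conjrel conj by simp
next
  case (refl w) then show ?case by simp
next
  case (sym a b) then show ?case by simp
next
  case (trans a b c) then show ?case by simp
qed

definition tlet :: "bool \<Rightarrow> 'a hnn_letter" where "tlet e = (if e then T else Tinv)"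

fun tw :: "(bool \<times> 'a) list \<Rightarrow> 'a hnn_letter list" where
  "tw [] = []"
| "tw ((e,r)#L) = tlet e # Gen r # tw L"

definition nfw where "nfw x = Gen (fst x) # tw (snd x)"

lemma tw_word: "okL L \<Longrightarrow> hnn_word H (tw L)"
  by (induction L rule: tw.induct) (auto simp: tlet_def)

lemma nfw_word: "x \<in> NF \<Longrightarrow> hnn_word H (nfw x)"
  by (auto simp: nfw_def NF_def tw_word)

lemma push_nopinch: "L \<noteq> [] \<Longrightarrow> \<not> (r = \<one> \<and> fst (hd L) \<noteq> e) \<Longrightarrow> push e c r L = (c, (e,r)#L)"
  by (cases L) (auto simp: push_def)

lemma push_nil: "push e c r [] = (c, [(e,r)])" by (simp add: push_def)

lemma S_back: "r \<in> carrier H \<Longrightarrow> c \<in> (if e then K else P) \<Longrightarrow> rp e (r \<otimes> c) = \<one> \<Longrightarrow> rp e r = \<one>"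
proof -
  assume r: "r \<in> carrier H" and c: "c \<in> (if e then K else P)" and e: "rp e (r \<otimes> c) = \<one>"
  have cc: "c \<in> carrier H" using c K_carr P_carr by (cases e) auto
  have "r \<otimes> c \<in> (if e then K else P)" using rp_one_iff[of "r \<otimes> c" e] e r cc by simp
  then have "(r \<otimes> c) \<otimes> inv c \<in> (if e then K else P)"
    using c subgroup.m_closed[OF subS] subgroup.m_inv_closed[OF subS] by blast
  moreover have "(r \<otimes> c) \<otimes> inv c = r" using r cc by (simp add: m_assoc)
  ultimately show ?thesis using rp_one_iff[of r e] r by simp
qed

lemma actTlet: "y \<in> carrier H \<Longrightarrow>
   \<exists>c'. actL (tlet e) (y, L) = push e c' (rp e y) L \<and> c' \<in> (if e then P else K) \<and> c' \<in> carrier H"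
proof (cases e)
  case True
  assume y: "y \<in> carrier H"
  have "y \<otimes> inv (rp True y) \<in> K" using rp_K y by simp
  then show ?thesis using True by (auto simp: tlet_def phi_K intro!: P_carr phi_K)
next
  case False
  assume y: "y \<in> carrier H"
  have "y \<otimes> inv (rp False y) \<in> P" using rp_P y by simp
  then show ?thesis using False by (auto simp: tlet_def psi_K intro!: K_carr psi_K)
qed

lemma lemQ: "okL L \<Longrightarrow> L \<noteq> [] \<Longrightarrow> h \<in> carrier H \<Longrightarrow>
  \<exists>c L''. act (tw L) (h, []) = (c, L'') \<and> L'' \<noteq> [] \<and>
     last L'' = (fst (last L), rp (fst (last L)) (snd (last L) \<otimes> h)) \<and>
     fst (hd L'') = fst (hd L) \<and> c \<in> (if fst (hd L) then P else K) \<and> c \<in> carrier H"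
proof (induction L rule: tw.induct)
  case 1 then show ?case by simp
next
  case (2 e r L)
  have r: "r \<in> carrier H" "rp e r = r" using "2.prems" by auto
  show ?case
  proof (cases "L = []")
    case True
    have y: "r \<otimes> h \<in> carrier H" using r "2.prems" by simp
    obtain c' where c': "actL (tlet e) (r \<otimes> h, []) = push e c' (rp e (r \<otimes> h)) []"
      "c' \<in> (if e then P else K)" "c' \<in> carrier H" using actTlet[OF y] by blast
    show ?thesis using True c' by (simp add: push_nil)
  next
    case False
    obtain e' r' L3 where L: "L = (e', r') # L3" using False by (cases L) auto
    have okL: "okL L" and ne: "e \<noteq> e' \<longrightarrow> r \<noteq> \<one>" using "2.prems" L by auto
    obtain c L'' where IH: "act (tw L) (h, []) = (c, L'')" "L'' \<noteq> []"
      "last L'' = (fst (last L), rp (fst (last L)) (snd (last L) \<otimes> h))"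
      "fst (hd L'') = e'" "c \<in> (if e' then P else K)" "c \<in> carrier H"
      using "2.IH"[OF okL False "2.prems"(3)] L by auto
    have y: "r \<otimes> c \<in> carrier H" using r IH by simp
    obtain c' where c': "actL (tlet e) (r \<otimes> c, L'') = push e c' (rp e (r \<otimes> c)) L''"
      "c' \<in> (if e then P else K)" "c' \<in> carrier H" using actTlet[OF y] by blast
    have np: "\<not> (rp e (r \<otimes> c) = \<one> \<and> fst (hd L'') \<noteq> e)"
    proof
      assume a: "rp e (r \<otimes> c) = \<one> \<and> fst (hd L'') \<noteq> e"
      then have "e' \<noteq> e" using IH by simp
      then have "c \<in> (if e then K else P)" using IH(5) by (cases e) auto
      then have "rp e r = \<one>" using S_back r a by blast
      then show False using r ne \<open>e' \<noteq> e\<close> by simp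
    qed
    have "act (tw ((e, r) # L)) (h, []) = (c', (e, rp e (r \<otimes> c)) # L'')"
      using IH(1) c'(1) push_nopinch[OF IH(2) np] by simp
    then show ?thesis using IH c' False by auto
  qed
qed

declare hnn_rel.trans[trans]

lemma R_mult: "h1 \<in> carrier H \<Longrightarrow> h2 \<in> carrier H \<Longrightarrow> hnn_rel H K \<phi> [Gen h1, Gen h2] [Gen (h1 \<otimes> h2)]"
  using hnn_rel.mult[of H "[]" "[]" h1 h2 K \<phi>] by simp
lemma R_one: "hnn_rel H K \<phi> [Gen \<one>] []"
  using hnn_rel.one[of H "[]" "[]" K \<phi>] by simp
lemma R_tti: "hnn_rel H K \<phi> [T, Tinv] []"
  using hnn_rel.t_tinv[of H "[]" "[]" K \<phi>] by simp
lemma R_tit: "hnn_rel H K \<phi> [Tinv, T] []"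
  using hnn_rel.tinv_t[of H "[]" "[]" K \<phi>] by simp
lemma R_conj: "k \<in> K \<Longrightarrow> hnn_rel H K \<phi> [T, Gen k, Tinv] [Gen (\<phi> k)]"
  using hnn_rel.conj[of H "[]" "[]" k K \<phi>] K_carr by simp

lemma RC: "hnn_rel H K \<phi> a b \<Longrightarrow> hnn_word H u \<Longrightarrow> hnn_word H v \<Longrightarrow> hnn_rel H K \<phi> (u @ a @ v) (u @ b @ v)"
  by (rule hnn_rel_cong)
lemma RCs: "hnn_rel H K \<phi> a b \<Longrightarrow> hnn_word H u \<Longrightarrow> hnn_word H v \<Longrightarrow> hnn_rel H K \<phi> (u @ b @ v) (u @ a @ v)"
  by (rule hnn_rel_cong) (auto intro: hnn_rel.sym)

lemma letter_T: assumes x: "x \<in> NF" shows "hnn_rel H K \<phi> (T # nfw x) (nfw (actL T x))"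
proof -
  obtain h0 L where x0: "x = (h0, L)" by (cases x)
  have h0: "h0 \<in> carrier H" and L: "okL L" using x x0 by (auto simp: NF_def)
  have wL: "hnn_word H (tw L)" using tw_word L .
  define r where "r = rp True h0"
  define k where "k = h0 \<otimes> inv r"
  have r: "r \<in> carrier H" using h0 r_def by simp
  have k: "k \<in> K" using rp_K h0 r_def k_def by simp
  have kc: "k \<in> carrier H" using k K_carr by simp
  have h0e: "h0 = k \<otimes> r" using k_def r h0 by (simp add: m_assoc)
  have a1: "actL T x = push True (\<phi> k) r L" using x0 r_def k_def by simp
  have "hnn_rel H K \<phi> (T # nfw x) ([T] @ [Gen k, Gen r] @ tw L)"
    using RCs[OF R_mult[OF kc r], of "[T]" "tw L"] wL x0 h0e by (simp add: nfw_def)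
  also have "hnn_rel H K \<phi> ... ([T, Gen k] @ [Tinv, T] @ Gen r # tw L)"
    using RCs[OF R_tit, of "[T, Gen k]" "Gen r # tw L"] wL kc r by simp
  also have "hnn_rel H K \<phi> ... ([] @ [Gen (\<phi> k)] @ T # Gen r # tw L)"
    using RC[OF R_conj[OF k], of "[]" "T # Gen r # tw L"] wL r by simp
  finally have 1: "hnn_rel H K \<phi> (T # nfw x) (Gen (\<phi> k) # T # Gen r # tw L)" by simp
  show ?thesis
  proof (cases "\<exists>r1 L'. L = (False, r1) # L' \<and> r = \<one>")
    case True
    then obtain r1 L' where L1: "L = (False, r1) # L'" and r1: "r = \<one>" by blast
    have r1c: "r1 \<in> carrier H" using L L1 by auto
    have wL': "hnn_word H (tw L')" using tw_word L L1 by simp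
    have pk: "\<phi> k \<in> carrier H" using kc by simp
    have "hnn_rel H K \<phi> (Gen (\<phi> k) # T # Gen r # tw L) ([Gen (\<phi> k), T] @ [] @ Tinv # Gen r1 # tw L')"
      using RC[OF R_one, of "[Gen (\<phi> k), T]" "Tinv # Gen r1 # tw L'"] r1 L1 pk wL' r1c by (simp add: tlet_def)
    also have "hnn_rel H K \<phi> ... ([Gen (\<phi> k)] @ [] @ Gen r1 # tw L')"
      using RC[OF R_tti, of "[Gen (\<phi> k)]" "Gen r1 # tw L'"] pk wL' r1c by simp
    also have "hnn_rel H K \<phi> ... ([] @ [Gen (\<phi> k \<otimes> r1)] @ tw L')"
      using RC[OF R_mult[OF pk r1c], of "[]" "tw L'"] wL' by simp
    finally have 2: "hnn_rel H K \<phi> (Gen (\<phi> k) # T # Gen r # tw L) (Gen (\<phi> k \<otimes> r1) # tw L')" by simp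
    have "actL T x = (\<phi> k \<otimes> r1, L')" using a1 L1 r1 by (simp add: push_def)
    then show ?thesis using hnn_rel.trans[OF 1 2] by (simp add: nfw_def)
  next
    case False
    then have "actL T x = (\<phi> k, (True, r) # L)" using a1 by (auto simp: push_def split: list.splits)
    then show ?thesis using 1 by (simp add: nfw_def tlet_def)
  qed
qed

lemma letter_Ti: assumes x: "x \<in> NF" shows "hnn_rel H K \<phi> (Tinv # nfw x) (nfw (actL Tinv x))"
proof -
  obtain h0 L where x0: "x = (h0, L)" by (cases x)
  have h0: "h0 \<in> carrier H" and L: "okL L" using x x0 by (auto simp: NF_def)
  have wL: "hnn_word H (tw L)" using tw_word L .
  define r where "r = rp False h0"
  define k where "k = psi (h0 \<otimes> inv r)"
  have r: "r \<in> carrier H" using h0 r_def by simp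
  have kP: "h0 \<otimes> inv r \<in> P" using rp_P h0 r_def by simp
  have k: "k \<in> K" "\<phi> k = h0 \<otimes> inv r" using kP psi_K k_def by auto
  have kc: "k \<in> carrier H" using k K_carr by simp
  have pk: "\<phi> k \<in> carrier H" using kc by simp
  have h0e: "h0 = \<phi> k \<otimes> r" using k r h0 by (simp add: m_assoc)
  have a1: "actL Tinv x = push False k r L" using x0 r_def k_def by simp
  have "hnn_rel H K \<phi> (Tinv # nfw x) ([Tinv] @ [Gen (\<phi> k), Gen r] @ tw L)"
    using RCs[OF R_mult[OF pk r], of "[Tinv]" "tw L"] wL x0 h0e by (simp add: nfw_def)
  also have "hnn_rel H K \<phi> ... ([Tinv] @ [T, Gen k, Tinv] @ Gen r # tw L)"
    using RCs[OF R_conj[OF k(1)], of "[Tinv]" "Gen r # tw L"] wL r by simp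
  also have "hnn_rel H K \<phi> ... ([] @ [] @ Gen k # Tinv # Gen r # tw L)"
    using RC[OF R_tit, of "[]" "Gen k # Tinv # Gen r # tw L"] wL r kc by simp
  finally have 1: "hnn_rel H K \<phi> (Tinv # nfw x) (Gen k # Tinv # Gen r # tw L)" by simp
  show ?thesis
  proof (cases "\<exists>r1 L'. L = (True, r1) # L' \<and> r = \<one>")
    case True
    then obtain r1 L' where L1: "L = (True, r1) # L'" and r1: "r = \<one>" by blast
    have r1c: "r1 \<in> carrier H" using L L1 by auto
    have wL': "hnn_word H (tw L')" using tw_word L L1 by simp
    have "hnn_rel H K \<phi> (Gen k # Tinv # Gen r # tw L) ([Gen k, Tinv] @ [] @ T # Gen r1 # tw L')"
      using RC[OF R_one, of "[Gen k, Tinv]" "T # Gen r1 # tw L'"] r1 L1 kc wL' r1c by (simp add: tlet_def)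
    also have "hnn_rel H K \<phi> ... ([Gen k] @ [] @ Gen r1 # tw L')"
      using RC[OF R_tit, of "[Gen k]" "Gen r1 # tw L'"] kc wL' r1c by simp
    also have "hnn_rel H K \<phi> ... ([] @ [Gen (k \<otimes> r1)] @ tw L')"
      using RC[OF R_mult[OF kc r1c], of "[]" "tw L'"] wL' by simp
    finally have 2: "hnn_rel H K \<phi> (Gen k # Tinv # Gen r # tw L) (Gen (k \<otimes> r1) # tw L')" by simp
    have "actL Tinv x = (k \<otimes> r1, L')" using a1 L1 r1 by (simp add: push_def)
    then show ?thesis using hnn_rel.trans[OF 1 2] by (simp add: nfw_def)
  next
    case False
    then have "actL Tinv x = (k, (False, r) # L)" using a1 by (auto simp: push_def split: list.splits)
    then show ?thesis using 1 by (simp add: nfw_def tlet_def)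
  qed
qed

lemma letter_Gen: assumes x: "x \<in> NF" and h: "h \<in> carrier H"
  shows "hnn_rel H K \<phi> (Gen h # nfw x) (nfw (actL (Gen h) x))"
proof -
  have "fst x \<in> carrier H" "hnn_word H (tw (snd x))" using x tw_word by (auto simp: NF_def)
  then show ?thesis using RC[OF R_mult[OF h, of "fst x"], of "[]" "tw (snd x)"] by (simp add: nfw_def)
qed

definition base where "base = (\<one>, [])"
lemma base_NF: "base \<in> NF" by (simp add: base_def NF_def)

lemma F2: "hnn_word H w \<Longrightarrow> hnn_rel H K \<phi> w (nfw (act w base))"
proof (induction w)
  case Nil
  show ?case using hnn_rel.sym[OF R_one] by (simp add: nfw_def base_def)
next
  case (Cons a w)
  have w: "hnn_word H w" and a: "hnn_word H [a]" using Cons.prems by (cases a; auto)+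
  have n: "act w base \<in> NF" using act_NF w base_NF by blast
  have "hnn_rel H K \<phi> ([a] @ w @ []) ([a] @ nfw (act w base) @ [])"
    using RC[OF Cons.IH[OF w] a, of "[]"] by simp
  moreover have "hnn_rel H K \<phi> (a # nfw (act w base)) (nfw (actL a (act w base)))"
  proof (cases a)
    case (Gen h) then show ?thesis using letter_Gen n a by simp
  next
    case T then show ?thesis using letter_T n by simp
  next
    case Tinv then show ?thesis using letter_Ti n by simp
  qed
  ultimately show ?case by (simp add: hnn_rel.trans)
qed

lemma okL_last: "okL L \<Longrightarrow> L \<noteq> [] \<Longrightarrow> snd (last L) \<in> carrier H \<and> rp (fst (last L)) (snd (last L)) = snd (last L)"
  by (induction L rule: okL.induct) (auto split: list.splits)

lemma carrier_not_sub: assumes KH: "K \<noteq> carrier H" shows "\<not> carrier H \<subseteq> (if e then K else P)"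
proof
  assume a: "carrier H \<subseteq> (if e then K else P)"
  have "carrier H \<subseteq> K"
  proof (cases e)
    case True then show ?thesis using a by simp
  next
    case False
    show ?thesis
    proof
      fix h assume h: "h \<in> carrier H"
      then have "\<phi> h \<in> P" using a False by auto
      then obtain k where k: "k \<in> K" "\<phi> h = \<phi> k" unfolding P_def by auto
      then have "h = k" using phi_inj h K_carr by (meson inj_onD)
      then show "h \<in> K" using k by simp
    qed
  qed
  then show False using KH K_carr by blast
qed
end


lemma (in group) gl1:
  assumes g: "g \<in> carrier G" and a: "a \<in> carrier G" and c: "c \<in> carrier G"
    and e: "inv g \<otimes> a \<otimes> g = inv c \<otimes> a \<otimes> c"
  shows "a \<otimes> (g \<otimes> inv c) = (g \<otimes> inv c) \<otimes> a"
proof -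
  have "inv g \<otimes> (a \<otimes> g) = inv c \<otimes> a \<otimes> c" using e g a by (simp add: m_assoc)
  then have "a \<otimes> g = g \<otimes> (inv c \<otimes> a \<otimes> c)" using inv_solve_left' g a c by simp
  then have "a \<otimes> g \<otimes> inv c = g \<otimes> (inv c \<otimes> a \<otimes> c) \<otimes> inv c" by simp
  also have "... = g \<otimes> inv c \<otimes> a" using g a c by (simp add: m_assoc)
  finally show ?thesis using g a c by (simp add: m_assoc)
qed

theorem lemma4p3:
  fixes H :: "'a monoid" and K :: "'a set" and \<phi> :: "'a \<Rightarrow> 'a"
    and g :: "'a hnn_letter list set" and x y :: 'a
  assumes "group H" and "subgroup K H" and "K \<noteq> carrier H" and "\<phi> \<in> iso H H"
    and "g \<in> carrier (HNN H K \<phi>)" and "x \<in> carrier H" and "y \<in> carrier H"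
    and "inv\<^bsub>HNN H K \<phi>\<^esub> g \<otimes>\<^bsub>HNN H K \<phi>\<^esub> hnn_emb H K \<phi> y \<otimes>\<^bsub>HNN H K \<phi>\<^esub> hnn_t H K \<phi>
           \<otimes>\<^bsub>HNN H K \<phi>\<^esub> g
         = inv\<^bsub>HNN H K \<phi>\<^esub> hnn_emb H K \<phi> x \<otimes>\<^bsub>HNN H K \<phi>\<^esub> hnn_emb H K \<phi> (\<phi> x)
           \<otimes>\<^bsub>HNN H K \<phi>\<^esub> hnn_t H K \<phi>"
    and "\<forall>h \<in> carrier H.
           inv\<^bsub>HNN H K \<phi>\<^esub> g \<otimes>\<^bsub>HNN H K \<phi>\<^esub> hnn_emb H K \<phi> h \<otimes>\<^bsub>HNN H K \<phi>\<^esub> g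
         = inv\<^bsub>HNN H K \<phi>\<^esub> hnn_emb H K \<phi> x \<otimes>\<^bsub>HNN H K \<phi>\<^esub> hnn_emb H K \<phi> h
           \<otimes>\<^bsub>HNN H K \<phi>\<^esub> hnn_emb H K \<phi> x"
  shows "g \<in> hnn_emb H K \<phi> ` K"
proof -
  interpret L: hnnl H K \<phi>
    by (intro hnnl.intro hnnl_axioms.intro) (use assms in auto)
  interpret G: group "HNN H K \<phi>" using HNN_group assms(1) by blast
  have emb: "\<And>h. hnn_emb H K \<phi> h = cls H K \<phi> [Gen h]" by (simp add: hnn_emb_def)
  have tdef: "hnn_t H K \<phi> = cls H K \<phi> [T]" by (simp add: hnn_t_def)
  have wcar: "\<And>w. hnn_word H w \<Longrightarrow> cls H K \<phi> w \<in> carrier (HNN H K \<phi>)"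
    by (auto simp: HNN_carrier)
  have ecar: "\<And>h. h \<in> carrier H \<Longrightarrow> cls H K \<phi> [Gen h] \<in> carrier (HNN H K \<phi>)"
    by (rule wcar) simp
  have tcar: "cls H K \<phi> [T] \<in> carrier (HNN H K \<phi>)" by (rule wcar) simp
  have M: "\<And>a b. hnn_word H a \<Longrightarrow> hnn_word H b \<Longrightarrow>
      cls H K \<phi> a \<otimes>\<^bsub>HNN H K \<phi>\<^esub> cls H K \<phi> b = cls H K \<phi> (a @ b)"
    using HNN_mult assms(1) by blast
  have E1: "\<And>a b. a \<in> carrier H \<Longrightarrow> b \<in> carrier H \<Longrightarrow>
     cls H K \<phi> [Gen a] \<otimes>\<^bsub>HNN H K \<phi>\<^esub> cls H K \<phi> [Gen b] = cls H K \<phi> [Gen (a \<otimes>\<^bsub>H\<^esub> b)]"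
    using M L.R_mult cls_eq by fastforce
  have one: "cls H K \<phi> [Gen \<one>\<^bsub>H\<^esub>] = \<one>\<^bsub>HNN H K \<phi>\<^esub>"
    using cls_eq[OF L.R_one] HNN_one by metis
  have E2: "\<And>a. a \<in> carrier H \<Longrightarrow> inv\<^bsub>HNN H K \<phi>\<^esub> (cls H K \<phi> [Gen a]) = cls H K \<phi> [Gen (inv\<^bsub>H\<^esub> a)]"
    by (rule G.inv_equality) (auto simp: E1 one ecar)
  obtain gw where gw: "hnn_word H gw" "g = cls H K \<phi> gw" using assms(5) by (auto simp: HNN_carrier)
  define zw where "zw = gw @ [Gen (inv\<^bsub>H\<^esub> x)]"
  have zww: "hnn_word H zw" using gw assms(6) by (simp add: zw_def)
  have z: "g \<otimes>\<^bsub>HNN H K \<phi>\<^esub> inv\<^bsub>HNN H K \<phi>\<^esub> (cls H K \<phi> [Gen x]) = cls H K \<phi> zw"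
    using gw assms(6) by (simp add: E2 M zw_def)
  have comm: "\<And>h. h \<in> carrier H \<Longrightarrow> L.act (Gen h # zw) L.base = L.act (zw @ [Gen h]) L.base"
  proof -
    fix h assume h: "h \<in> carrier H"
    have "cls H K \<phi> [Gen h] \<otimes>\<^bsub>HNN H K \<phi>\<^esub> (g \<otimes>\<^bsub>HNN H K \<phi>\<^esub> inv\<^bsub>HNN H K \<phi>\<^esub> (cls H K \<phi> [Gen x]))
       = (g \<otimes>\<^bsub>HNN H K \<phi>\<^esub> inv\<^bsub>HNN H K \<phi>\<^esub> (cls H K \<phi> [Gen x])) \<otimes>\<^bsub>HNN H K \<phi>\<^esub> cls H K \<phi> [Gen h]"
      by (rule G.gl1) (use assms(5,6,9) h ecar emb in auto)
    then have "cls H K \<phi> (Gen h # zw) = cls H K \<phi> (zw @ [Gen h])"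
      using z M zww h by simp
    then have "hnn_rel H K \<phi> (Gen h # zw) (zw @ [Gen h])"
      by (rule cls_eqD) (use zww h in simp)
    then show "L.act (Gen h # zw) L.base = L.act (zw @ [Gen h]) L.base"
      using L.act_rel L.base_NF by blast
  qed
  define n where "n = L.act zw L.base"
  have nNF: "n \<in> L.NF" using L.act_NF zww L.base_NF n_def by blast
  obtain h0 Lst where n0: "n = (h0, Lst)" by (cases n)
  have h0: "h0 \<in> carrier H" and okL: "L.okL Lst" using nNF n0 by (auto simp: L.NF_def)
  have F2: "hnn_rel H K \<phi> zw (L.nfw n)" using L.F2 zww n_def by simp
  have Lnil: "Lst = []"
  proof (rule ccontr)
    assume ne: "Lst \<noteq> []"
    define en where "en = fst (last Lst)"
    define rn where "rn = snd (last Lst)"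
    have rn: "rn \<in> carrier H" "L.rp en rn = rn" using L.okL_last[OF okL ne] en_def rn_def by auto
    have key: "\<And>h. h \<in> carrier H \<Longrightarrow> L.rp en (rn \<otimes>\<^bsub>H\<^esub> h) = rn"
    proof -
      fix h assume h: "h \<in> carrier H"
      have hNF: "(h, []) \<in> L.NF" using h by (simp add: L.NF_def)
      have "L.act (zw @ [Gen h]) L.base = L.act zw (h, [])" using h by (simp add: L.base_def)
      also have "... = L.act (L.nfw n) (h, [])" using L.act_rel[OF F2 hNF] .
      finally have 1: "L.act (zw @ [Gen h]) L.base = L.actL (Gen h0) (L.act (L.tw Lst) (h, []))"
        using n0 by (simp add: L.nfw_def)
      have 2: "L.act (Gen h # zw) L.base = (h \<otimes>\<^bsub>H\<^esub> h0, Lst)"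
        by (simp add: n_def[symmetric] n0)
      obtain c L'' where Q: "L.act (L.tw Lst) (h, []) = (c, L'')"
         "last L'' = (en, L.rp en (rn \<otimes>\<^bsub>H\<^esub> h))"
        using L.lemQ[OF okL ne h] en_def rn_def by blast
      have "Lst = L''" using comm[OF h] 1 2 Q by simp
      then show "L.rp en (rn \<otimes>\<^bsub>H\<^esub> h) = rn" using Q(2) rn_def by (metis snd_conv)
    qed
    have "carrier H \<subseteq> (if en then K else L.P)"
    proof
      fix h' assume h': "h' \<in> carrier H"
      define h where "h = inv\<^bsub>H\<^esub> rn \<otimes>\<^bsub>H\<^esub> h' \<otimes>\<^bsub>H\<^esub> rn"
      have h: "h \<in> carrier H" using h' rn h_def by simp
      have "(rn \<otimes>\<^bsub>H\<^esub> h) \<otimes>\<^bsub>H\<^esub> inv\<^bsub>H\<^esub> rn \<in> (if en then K else L.P)"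
        using L.rp_eqD[of "rn \<otimes>\<^bsub>H\<^esub> h" rn en] key[OF h] rn h by simp
      moreover have "(rn \<otimes>\<^bsub>H\<^esub> h) \<otimes>\<^bsub>H\<^esub> inv\<^bsub>H\<^esub> rn = h'"
        using h' rn h_def by (simp add: L.m_assoc) (simp add: L.m_assoc[symmetric])
      ultimately show "h' \<in> (if en then K else L.P)" by simp
    qed
    then show False using L.carrier_not_sub[OF assms(3)] by blast
  qed
  have "hnn_rel H K \<phi> zw [Gen h0]" using F2 n0 Lnil by (simp add: L.nfw_def)
  then have "cls H K \<phi> zw = cls H K \<phi> [Gen h0]" by (rule cls_eq)
  then have "g \<otimes>\<^bsub>HNN H K \<phi>\<^esub> inv\<^bsub>HNN H K \<phi>\<^esub> (cls H K \<phi> [Gen x]) = cls H K \<phi> [Gen h0]" using z by simp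
  then have "g = cls H K \<phi> [Gen h0] \<otimes>\<^bsub>HNN H K \<phi>\<^esub> cls H K \<phi> [Gen x]"
    using G.inv_solve_right' assms(5,6) ecar h0 by blast
  then have gw0: "g = cls H K \<phi> [Gen w]" if "w = h0 \<otimes>\<^bsub>H\<^esub> x" for w
    using E1 h0 assms(6) that by simp
  define w where "w = h0 \<otimes>\<^bsub>H\<^esub> x"
  have wc: "w \<in> carrier H" using h0 assms(6) w_def by simp
  have gw1: "g = cls H K \<phi> [Gen w]" using gw0 w_def by simp
  have "cls H K \<phi> [Gen (inv\<^bsub>H\<^esub> w), Gen y, T, Gen w] = cls H K \<phi> [Gen (inv\<^bsub>H\<^esub> x), Gen (\<phi> x), T]"
    using assms(8) unfolding gw1 emb tdef using wc assms(6,7) by (simp add: E2 M)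
  then have "hnn_rel H K \<phi> [Gen (inv\<^bsub>H\<^esub> w), Gen y, T, Gen w] [Gen (inv\<^bsub>H\<^esub> x), Gen (\<phi> x), T]"
    by (rule cls_eqD) (use assms(6) in simp)
  then have "L.act [Gen (inv\<^bsub>H\<^esub> w), Gen y, T, Gen w] L.base = L.act [Gen (inv\<^bsub>H\<^esub> x), Gen (\<phi> x), T] L.base"
    using L.act_rel L.base_NF by blast
  then have "snd (L.actL T (w, [])) = snd (L.actL T (\<one>\<^bsub>H\<^esub>, []))"
    using wc by (simp add: L.base_def)
  then have "L.rp True w = L.rp True \<one>\<^bsub>H\<^esub>" by (simp add: L.push_def)
  then have "L.rp True w = \<one>\<^bsub>H\<^esub>" using L.rp_one_iff[of "\<one>\<^bsub>H\<^esub>" True] subgroup.one_closed[OF assms(2)] by simp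
  then have "w \<in> K" using L.rp_one_iff[OF wc, of True] by simp
  then show ?thesis using gw1 emb by auto
qed

end
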